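(* Let $m,n\ge0$. The elements $R(I,J)$ with $(I,J)\in X^+(m,n)$ span the ring $U^+_{m,n}$ as a $\mathbb Z$-module.
   Context: $U^+_{m,n}$ is the commutative ring generated over $\mathbb Z$ by $u_1,u_2,\dots$ and $v_0,v_1,\dots$, with conventions $u_0=1$ and $u_i=v_i=0$ for $i<0$, subject to the relations $R_I(w)=0$ for all $I\in\mathbb Z^{m+1}$, where $w_i=u_i-v_{-i-m+n}$ ($i\in\mathbb Z$) and for $I=(i_1,\dots,i_p)\in\mathbb Z^p$, $R_I(w)=\det(w_{i_\alpha+\beta-1})_{1\le\alpha,\beta\le p}$ ($R_\emptyset=1$); write $|I|=p$. For $I\in\mathbb Z^p$ and $J=(j_1,\dots,j_q)$ nonnegative integers, $R(I,J)=R_I(w)u_1^{j_1}\cdots u_q^{j_q}$. $X^+(m,n)$ is the set of pairs $(I,J)$ with $I$ a strictly decreasing finite sequence of integers, $J$ a finite sequence of nonnegative integers, $|I|\le m$, $|J|\le n$, $|I|-|J|=m-n$. *)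

theory Defs
  imports "HOL-Library.Poly_Mapping" "Jordan_Normal_Form.Determinant"
begin

text \<open>Generators of the polynomial ring: Ugen k stands for u_(k+1) (k = 0,1,...),
  Vgen k stands for v_k (k = 0,1,...).\<close>
datatype var = Ugen nat | Vgen nat

type_synonym zpoly = "(var \<Rightarrow>\<^sub>0 nat) \<Rightarrow>\<^sub>0 int"

definition Var :: "var \<Rightarrow> zpoly" where
  "Var x = Poly_Mapping.single (Poly_Mapping.single x 1) 1"

definition uu :: "int \<Rightarrow> zpoly" where
  "uu i = (if i = 0 then 1 else if i > 0 then Var (Ugen (nat (i - 1))) else 0)"

definition vv :: "int \<Rightarrow> zpoly" where
  "vv i = (if i < 0 then 0 else Var (Vgen (nat i)))"

definition ww :: "nat \<Rightarrow> nat \<Rightarrow> int \<Rightarrow> zpoly" where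
  "ww m n i = uu i - vv (- i - int m + int n)"

text \<open>R_I(w) = det (w_(i_alpha + beta - 1)), 1 <= alpha, beta <= p (here 0-indexed).\<close>
definition RI :: "nat \<Rightarrow> nat \<Rightarrow> int list \<Rightarrow> zpoly" where
  "RI m n I = det (mat (length I) (length I) (\<lambda>(a, b). ww m n (I ! a + int b)))"

definition RIJ :: "nat \<Rightarrow> nat \<Rightarrow> int list \<Rightarrow> nat list \<Rightarrow> zpoly" where
  "RIJ m n I J = RI m n I * (\<Prod>k<length J. uu (int k + 1) ^ (J ! k))"

definition Xplus :: "nat \<Rightarrow> nat \<Rightarrow> (int list \<times> nat list) set" where
  "Xplus m n = {(I, J). sorted_wrt (>) I \<and> length I \<le> m \<and> length J \<le> n
       \<and> int (length I) - int (length J) = int m - int n}"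

definition gen_ideal :: "('a::comm_ring_1) set \<Rightarrow> 'a set" where
  "gen_ideal S = {\<Sum>i<k. a i * s i | (k::nat) a s. \<forall>i<k. s i \<in> S}"

definition zspan :: "('a::comm_ring_1) set \<Rightarrow> 'a set" where
  "zspan S = {\<Sum>i<k. of_int (c i) * s i | (k::nat) c s. \<forall>i<k. s i \<in> S}"

text \<open>The defining ideal of U^+_(m,n): generated by R_I(w), I in Z^(m+1).\<close>
definition Uideal :: "nat \<Rightarrow> nat \<Rightarrow> zpoly set" where
  "Uideal m n = gen_ideal {RI m n I | I. length I = m + 1}"

end

theory Submission
  imports Defs "HOL-Combinatorics.Permutations"
begin

definition Mw :: "(int \<Rightarrow> 'a::comm_ring_1) \<Rightarrow> int list \<Rightarrow> 'a" where
  "Mw w K = det (mat (length K) (length K) (\<lambda>(a,b). w (K!a + int b)))"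

definition Cm :: "(int \<Rightarrow> 'a::comm_ring_1) \<Rightarrow> int list \<Rightarrow> nat \<Rightarrow> 'a" where
  "Cm w K j = det (mat (length K) (length K) (\<lambda>(a,b). w (K!a + int b + (if j \<le> b then 1 else 0))))"

lemma Mw_lap:
  "Mw w (K @ [y]) = (\<Sum>j<Suc (length K). (-1)^(length K + j) * w (y + int j) * Cm w K j)"
proof -
  let ?p = "length K"
  let ?A = "mat (Suc ?p) (Suc ?p) (\<lambda>(a,b). w ((K @ [y])!a + int b))"
  have A: "?A \<in> carrier_mat (Suc ?p) (Suc ?p)" by simp
  have "Mw w (K @ [y]) = det ?A" unfolding Mw_def by simp
  also have "\<dots> = (\<Sum>j<Suc ?p. ?A $$ (?p,j) * cofactor ?A ?p j)"
    by (rule laplace_expansion_row[OF A], simp)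
  also have "\<dots> = (\<Sum>j<Suc ?p. (-1)^(?p + j) * w (y + int j) * Cm w K j)"
  proof (rule sum.cong[OF refl])
    fix j assume j: "j \<in> {..<Suc ?p}"
    have md: "mat_delete ?A ?p j = mat ?p ?p (\<lambda>(a,b). w (K!a + int b + (if j \<le> b then 1 else 0)))"
      unfolding mat_delete_def
      by (rule eq_matI, insert j, auto simp: nth_append algebra_simps)
    show "?A $$ (?p,j) * cofactor ?A ?p j = (-1)^(?p + j) * w (y + int j) * Cm w K j"
      unfolding cofactor_def md Cm_def using j by simp
  qed
  finally show ?thesis .
qed

lemma Cm_0: "Cm w K 0 = Mw w (map (\<lambda>x. x + 1) K)"
  unfolding Cm_def Mw_def
  by (rule arg_cong[where f=det], rule eq_matI, auto simp: algebra_simps)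

lemma Cm_top: "Cm w K (length K) = Mw w K"
  unfolding Cm_def Mw_def
  by (rule arg_cong[where f=det], rule eq_matI, auto)


lemma upclosed_top:
  fixes T :: "nat set"
  assumes T: "T \<subseteq> {..<n}" and c: "card T = n - j" and j: "j \<le> n"
    and up: "\<forall>b\<in>T. Suc b < n \<longrightarrow> Suc b \<in> T"
  shows "T = {j..<n}"
proof (cases "T = {}")
  case True
  with c j have "j = n" by simp
  with True show ?thesis by simp
next
  case False
  have fin: "finite T" using T finite_subset by blast
  define t where "t = Min T"
  have tT: "t \<in> T" using Min_in[OF fin False] t_def by simp
  have tle: "\<forall>x\<in>T. t \<le> x" using Min_le[OF fin] t_def by simp
  have "t + d < n \<longrightarrow> t + d \<in> T" for d
  proof (induction d)
    case 0 then show ?case using tT by simp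
  next
    case (Suc d)
    show ?case
    proof
      assume h: "t + Suc d < n"
      hence "t + d \<in> T" using Suc by simp
      thus "t + Suc d \<in> T" using up h by auto
    qed
  qed
  hence sub: "{t..<n} \<subseteq> T" by (metis atLeastLessThan_iff le_Suc_ex subsetI)
  have "T \<subseteq> {t..<n}" using T tle by auto
  with sub have eq: "T = {t..<n}" by auto
  with c have "n - t = n - j" by simp
  moreover have "t < n" using tT T by auto
  ultimately have "t = j" using j by linarith
  with eq show ?thesis by simp
qed

definition Dt :: "(int \<Rightarrow> 'a::comm_ring_1) \<Rightarrow> int list \<Rightarrow> nat set \<Rightarrow> 'a" where
  "Dt w K T = det (mat (length K) (length K) (\<lambda>(a,b). w (K!a + int b + (if b \<in> T then 1 else 0))))"

definition Ksh :: "int list \<Rightarrow> nat set \<Rightarrow> int list" where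
  "Ksh K S = map (\<lambda>a. K!a + (if a \<in> S then 1 else 0)) [0..<length K]"

lemma length_Ksh[simp]: "length (Ksh K S) = length K" by (simp add: Ksh_def)

lemma Dt_zero:
  assumes T: "T \<subseteq> {..<length K}" and c: "card T = length K - j" and j: "j \<le> length K"
    and ne: "T \<noteq> {j..<length K}"
  shows "Dt w K T = 0"
proof -
  let ?n = "length K"
  from upclosed_top[OF T c j] ne obtain b where b: "b \<in> T" "Suc b < ?n" "Suc b \<notin> T" by blast
  let ?A = "mat ?n ?n (\<lambda>(a,b). w (K!a + int b + (if b \<in> T then 1 else 0)))"
  have "det ?A = 0"
    by (rule det_identical_columns[of _ ?n b "Suc b"], insert b, auto intro!: eq_vecI simp: algebra_simps)
  thus ?thesis unfolding Dt_def .
qed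

lemma Dt_top: "j \<le> length K \<Longrightarrow> Dt w K {j..<length K} = Cm w K j"
  unfolding Dt_def Cm_def
  by (rule arg_cong[where f=det], rule eq_matI, auto)

lemma Cm_e:
  assumes j: "j \<le> length K"
  shows "Cm w K j = (\<Sum>S\<in>{S. S \<subseteq> {..<length K} \<and> card S = length K - j}. Mw w (Ksh K S))"
proof -
  let ?n = "length K"
  let ?Sub = "{S. S \<subseteq> {..<?n} \<and> card S = ?n - j}"
  let ?P = "{p. p permutes {0..<?n}}"
  have finSub: "finite ?Sub" by (rule finite_subset[of _ "Pow {..<?n}"], auto)
  have M: "Mw w (Ksh K S) = (\<Sum>p\<in>?P. signof p * (\<Prod>i=0..<?n. w (K!i + int (p i) + (if i \<in> S then 1 else 0))))" for S
    unfolding Mw_def by (subst det_def'[of _ ?n], simp, rule sum.cong, auto intro!: prod.cong simp: Ksh_def algebra_simps)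
  have D: "Dt w K T = (\<Sum>p\<in>?P. signof p * (\<Prod>i=0..<?n. w (K!i + int (p i) + (if p i \<in> T then 1 else 0))))" for T
    unfolding Dt_def by (subst det_def'[of _ ?n], simp, rule sum.cong, auto intro!: prod.cong)
  have "(\<Sum>S\<in>?Sub. Mw w (Ksh K S)) = (\<Sum>p\<in>?P. signof p * (\<Sum>S\<in>?Sub. (\<Prod>i=0..<?n. w (K!i + int (p i) + (if i \<in> S then 1 else 0)))))"
    unfolding M sum_distrib_left by (rule sum.swap)
  also have "\<dots> = (\<Sum>p\<in>?P. signof p * (\<Sum>T\<in>?Sub. (\<Prod>i=0..<?n. w (K!i + int (p i) + (if p i \<in> T then 1 else 0)))))"
  proof (rule sum.cong[OF refl])
    fix p assume "p \<in> ?P"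
    hence p: "p permutes {0..<?n}" by simp
    have ip: "Hilbert_Choice.inv p permutes {0..<?n}" using permutes_inv[OF p] .
    have "(\<Sum>S\<in>?Sub. (\<Prod>i=0..<?n. w (K!i + int (p i) + (if i \<in> S then 1 else 0))))
        = (\<Sum>T\<in>?Sub. (\<Prod>i=0..<?n. w (K!i + int (p i) + (if p i \<in> T then 1 else 0))))"
    proof (rule sum.reindex_bij_witness[where i="\<lambda>T. Hilbert_Choice.inv p ` T" and j="\<lambda>S. p ` S"])
      fix T assume "T \<in> ?Sub"
      show "p ` (Hilbert_Choice.inv p ` T) = T" using permutes_inverses(1)[OF p] by (simp add: image_comp)
      show "Hilbert_Choice.inv p ` T \<in> ?Sub"
      proof -
        have "Hilbert_Choice.inv p ` T \<subseteq> {..<?n}" using \<open>T \<in> ?Sub\<close> permutes_in_image[OF ip] by auto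
        moreover have "card (Hilbert_Choice.inv p ` T) = card T"
          by (rule card_image, rule permutes_inj_on[OF ip])
        ultimately show ?thesis using \<open>T \<in> ?Sub\<close> by auto
      qed
    next
      fix S assume S: "S \<in> ?Sub"
      show "Hilbert_Choice.inv p ` (p ` S) = S" using permutes_inverses(2)[OF p] by (simp add: image_comp)
      show "p ` S \<in> ?Sub"
      proof -
        have "p ` S \<subseteq> {..<?n}" using S permutes_in_image[OF p] by auto
        moreover have "card (p ` S) = card S"
          by (rule card_image, rule permutes_inj_on[OF p])
        ultimately show ?thesis using S by auto
      qed
      show "(\<Prod>i=0..<?n. w (K!i + int (p i) + (if p i \<in> p ` S then 1 else 0)))
          = (\<Prod>i=0..<?n. w (K!i + int (p i) + (if i \<in> S then 1 else 0)))"
        using permutes_inj[OF p] by (simp add: inj_image_mem_iff)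
    qed
    thus "signof p * (\<Sum>S\<in>?Sub. (\<Prod>i=0..<?n. w (K!i + int (p i) + (if i \<in> S then 1 else 0))))
        = signof p * (\<Sum>T\<in>?Sub. (\<Prod>i=0..<?n. w (K!i + int (p i) + (if p i \<in> T then 1 else 0))))" by simp
  qed
  also have "\<dots> = (\<Sum>T\<in>?Sub. Dt w K T)"
    unfolding D sum_distrib_left by (rule sum.swap)
  also have "\<dots> = (\<Sum>T\<in>{{j..<?n}}. Dt w K T)"
  proof (rule sum.mono_neutral_right[OF finSub])
    show "{{j..<?n}} \<subseteq> ?Sub" using j by auto
    show "\<forall>T\<in>?Sub - {{j..<?n}}. Dt w K T = 0" using Dt_zero j by auto
  qed
  also have "\<dots> = Dt w K {j..<?n}" by simp
  also have "\<dots> = Cm w K j" by (rule Dt_top[OF j])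
  finally show ?thesis ..
qed


lemma Mw_perm:
  assumes p: "p permutes {..<length K}"
  shows "Mw w (permute_list p K) = signof p * Mw w K"
proof -
  let ?n = "length K"
  let ?A = "mat ?n ?n (\<lambda>(a,b). w (K!a + int b))"
  have p': "p permutes {0..<?n}" using p by (simp add: lessThan_atLeast0)
  have "Mw w (permute_list p K) = det (mat ?n ?n (\<lambda>(i,j). ?A $$ (p i, j)))"
    unfolding Mw_def
  proof (rule arg_cong[where f=det], rule eq_matI)
    have pi: "\<And>i. i < ?n \<Longrightarrow> p i < ?n" using permutes_in_image[OF p] by auto
    fix i j assume "i < dim_row (mat ?n ?n (\<lambda>(i,j). ?A $$ (p i, j)))" "j < dim_col (mat ?n ?n (\<lambda>(i,j). ?A $$ (p i, j)))"
    thus "mat (length (permute_list p K)) (length (permute_list p K)) (\<lambda>(a,b). w (permute_list p K ! a + int b)) $$ (i, j) =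
          mat ?n ?n (\<lambda>(i,j). ?A $$ (p i, j)) $$ (i, j)"
      using pi by (auto simp: permute_list_nth[OF p])
  qed auto
  also have "\<dots> = signof p * det ?A" by (rule det_permute_rows[OF _ p'], simp)
  finally show ?thesis unfolding Mw_def .
qed

lemma Mw_dup:
  assumes "\<not> distinct K"
  shows "Mw w K = 0"
proof -
  let ?n = "length K"
  from assms obtain i j where ij: "i < ?n" "j < ?n" "i \<noteq> j" "K!i = K!j"
    by (auto simp: distinct_conv_nth)
  show ?thesis unfolding Mw_def
    by (rule det_identical_rows[of _ ?n i j], insert ij, auto intro!: eq_vecI)
qed

lemma Mw_sort:
  "\<exists>K' c. sorted_wrt (>) K' \<and> length K' = length K \<and> (c = 0 \<or> c = 1 \<or> c = -1) \<and> Mw w K = of_int c * Mw w K'"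
proof (cases "distinct K")
  case True
  let ?K' = "rev (sort K)"
  have ms: "mset ?K' = mset K" by simp
  obtain p where p: "p permutes {..<length K}" "permute_list p K = ?K'"
    using mset_eq_permutation[OF ms] by blast
  have e: "Mw w ?K' = signof p * Mw w K" using Mw_perm[OF p(1)] p(2) by simp
  have "sign p * sign p = (1::int)" by (simp add: sign_def)
  hence sq: "signof p * signof p = (1::'a)" by (metis of_int_1 of_int_mult)
  have "Mw w K = signof p * Mw w ?K'" using e sq by (simp add: mult.assoc[symmetric])
  moreover have "sorted_wrt (>) ?K'"
    using True by (simp add: sorted_wrt_rev strict_sorted_iff)
  moreover have "sign p = (0::int) \<or> sign p = 1 \<or> sign p = -1" by (simp add: sign_def)
  ultimately show ?thesis by (intro exI[of _ ?K'] exI[of _ "sign p"], auto)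
next
  case False
  let ?K' = "rev (map int [0..<length K])"
  have "sorted_wrt (>) ?K'" by (simp add: sorted_wrt_rev sorted_wrt_map)
  with Mw_dup[OF False] show ?thesis by (intro exI[of _ ?K'] exI[of _ 0], auto)
qed


lemma sum_concat:
  "(\<Sum>i<(k1::nat)+k2. if i < k1 then f i else g (i - k1)) = (\<Sum>i<k1. f i) + (\<Sum>i<k2. (g i :: 'a::comm_monoid_add))"
  by (induction k2) (auto simp: add.assoc)

lemma zspanI: "(\<forall>i<k. s i \<in> S) \<Longrightarrow> (\<Sum>i<(k::nat). of_int (c i) * s i) \<in> zspan S"
  unfolding zspan_def by blast

lemma zspanE: "x \<in> zspan S \<Longrightarrow> (\<And>k c s. x = (\<Sum>i<(k::nat). of_int (c i) * s i) \<Longrightarrow> (\<forall>i<k. s i \<in> S) \<Longrightarrow> P) \<Longrightarrow> P"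
  unfolding zspan_def by blast

lemma gen_idealI: "(\<forall>i<k. s i \<in> S) \<Longrightarrow> (\<Sum>i<(k::nat). c i * s i) \<in> gen_ideal S"
  unfolding gen_ideal_def by blast

lemma gen_idealE: "x \<in> gen_ideal S \<Longrightarrow> (\<And>k c s. x = (\<Sum>i<(k::nat). c i * s i) \<Longrightarrow> (\<forall>i<k. s i \<in> S) \<Longrightarrow> P) \<Longrightarrow> P"
  unfolding gen_ideal_def by blast

lemma zspan_add:
  assumes "x \<in> zspan S" "y \<in> zspan S" shows "x + y \<in> zspan S"
proof -
  from assms(1) obtain k1 c1 s1 where 1: "x = (\<Sum>i<(k1::nat). of_int (c1 i) * s1 i)" "\<forall>i<k1. s1 i \<in> S"
    by (rule zspanE)
  from assms(2) obtain k2 c2 s2 where 2: "y = (\<Sum>i<(k2::nat). of_int (c2 i) * s2 i)" "\<forall>i<k2. s2 i \<in> S"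
    by (rule zspanE)
  define c where "c i = (if i < k1 then c1 i else c2 (i - k1))" for i
  define s where "s i = (if i < k1 then s1 i else s2 (i - k1))" for i
  have "x + y = (\<Sum>i<k1+k2. of_int (c i) * s i)"
    unfolding 1 2 c_def s_def
    by (subst sum_concat[symmetric], rule sum.cong, auto)
  moreover have "\<forall>i<k1+k2. s i \<in> S" using 1 2 unfolding s_def by auto
  ultimately show ?thesis using zspanI by metis
qed

lemma zspan_smult:
  assumes "x \<in> zspan S" shows "of_int d * x \<in> zspan S"
proof -
  from assms obtain k c s where 1: "x = (\<Sum>i<(k::nat). of_int (c i) * s i)" "\<forall>i<k. s i \<in> S"
    by (rule zspanE)
  have "of_int d * x = (\<Sum>i<k. of_int (d * c i) * s i)"
    unfolding 1 sum_distrib_left by (simp add: mult.assoc)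
  with 1 zspanI show ?thesis by metis
qed

lemma zspan_gen: assumes "x \<in> S" shows "x \<in> zspan S"
proof -
  have "x = (\<Sum>i<(1::nat). of_int ((\<lambda>_. 1) i) * (\<lambda>_. x) i)" by simp
  also have "\<dots> \<in> zspan S" by (rule zspanI, use assms in simp)
  finally show ?thesis .
qed

lemma zspan_zero: "0 \<in> zspan S"
proof -
  have "0 = (\<Sum>i<(0::nat). of_int ((\<lambda>_. 0) i) * (\<lambda>_. 0) i)" by simp
  also have "\<dots> \<in> zspan S" by (rule zspanI, simp)
  finally show ?thesis .
qed

lemma gen_ideal_add:
  assumes "x \<in> gen_ideal S" "y \<in> gen_ideal S" shows "x + y \<in> gen_ideal S"
proof -
  from assms(1) obtain k1 c1 s1 where 1: "x = (\<Sum>i<(k1::nat). c1 i * s1 i)" "\<forall>i<k1. s1 i \<in> S"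
    by (rule gen_idealE)
  from assms(2) obtain k2 c2 s2 where 2: "y = (\<Sum>i<(k2::nat). c2 i * s2 i)" "\<forall>i<k2. s2 i \<in> S"
    by (rule gen_idealE)
  define c where "c i = (if i < k1 then c1 i else c2 (i - k1))" for i
  define s where "s i = (if i < k1 then s1 i else s2 (i - k1))" for i
  have "x + y = (\<Sum>i<k1+k2. c i * s i)"
    unfolding 1 2 c_def s_def
    by (subst sum_concat[symmetric], rule sum.cong, auto)
  moreover have "\<forall>i<k1+k2. s i \<in> S" using 1 2 unfolding s_def by auto
  ultimately show ?thesis using gen_idealI by metis
qed

lemma gen_ideal_mult:
  assumes "x \<in> gen_ideal S" shows "r * x \<in> gen_ideal S"
proof -
  from assms obtain k c s where 1: "x = (\<Sum>i<(k::nat). c i * s i)" "\<forall>i<k. s i \<in> S"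
    by (rule gen_idealE)
  have "r * x = (\<Sum>i<k. (r * c i) * s i)"
    unfolding 1 sum_distrib_left by (simp add: mult.assoc)
  with 1 gen_idealI show ?thesis by metis
qed

lemma gen_ideal_gen: assumes "x \<in> S" shows "x \<in> gen_ideal S"
proof -
  have "x = (\<Sum>i<(1::nat). (\<lambda>_. 1) i * (\<lambda>_. x) i)" by simp
  also have "\<dots> \<in> gen_ideal S" by (rule gen_idealI, use assms in simp)
  finally show ?thesis .
qed

lemma gen_ideal_zero: "0 \<in> gen_ideal S"
proof -
  have "0 = (\<Sum>i<(0::nat). (\<lambda>_. 0) i * (\<lambda>_. 0) i)" by simp
  also have "\<dots> \<in> gen_ideal S" by (rule gen_idealI, simp)
  finally show ?thesis .
qed


definition SS :: "nat \<Rightarrow> nat \<Rightarrow> zpoly set" where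
  "SS m n = {a + b | a b. a \<in> zspan {RIJ m n I J | I J. (I, J) \<in> Xplus m n} \<and> b \<in> Uideal m n}"

lemma SSI: "a \<in> zspan {RIJ m n I J | I J. (I, J) \<in> Xplus m n} \<Longrightarrow> b \<in> Uideal m n \<Longrightarrow> a + b \<in> SS m n"
  unfolding SS_def by blast

lemma SSE: "x \<in> SS m n \<Longrightarrow> (\<And>a b. x = a + b \<Longrightarrow> a \<in> zspan {RIJ m n I J | I J. (I, J) \<in> Xplus m n} \<Longrightarrow> b \<in> Uideal m n \<Longrightarrow> P) \<Longrightarrow> P"
  unfolding SS_def by blast

lemma SS_add:
  assumes "x \<in> SS m n" "y \<in> SS m n" shows "x + y \<in> SS m n"
proof -
  from assms(1) obtain a b where ab: "x = a + b" "a \<in> zspan {RIJ m n I J | I J. (I, J) \<in> Xplus m n}" "b \<in> Uideal m n"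
    by (rule SSE)
  from assms(2) obtain a' b' where ab': "y = a' + b'" "a' \<in> zspan {RIJ m n I J | I J. (I, J) \<in> Xplus m n}" "b' \<in> Uideal m n"
    by (rule SSE)
  have "x + y = (a + a') + (b + b')" unfolding ab(1) ab'(1) by (simp add: algebra_simps)
  moreover have "a + a' \<in> zspan {RIJ m n I J | I J. (I, J) \<in> Xplus m n}" by (rule zspan_add[OF ab(2) ab'(2)])
  moreover have "b + b' \<in> Uideal m n" using ab(3) ab'(3) unfolding Uideal_def by (rule gen_ideal_add)
  ultimately show ?thesis using SSI[of "a + a'" m n "b + b'"] by simp
qed

lemma SS_smult: "x \<in> SS m n \<Longrightarrow> of_int d * x \<in> SS m n"
proof -
  assume "x \<in> SS m n"
  then obtain a b where ab: "x = a + b" "a \<in> zspan {RIJ m n I J | I J. (I, J) \<in> Xplus m n}" "b \<in> Uideal m n"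
    by (rule SSE)
  have "of_int d * x = of_int d * a + of_int d * b" unfolding ab(1) by (simp add: distrib_left)
  moreover have "of_int d * a \<in> zspan {RIJ m n I J | I J. (I, J) \<in> Xplus m n}" by (rule zspan_smult[OF ab(2)])
  moreover have "of_int d * b \<in> Uideal m n" using ab(3) unfolding Uideal_def by (rule gen_ideal_mult)
  ultimately show ?thesis using SSI[of "of_int d * a" m n "of_int d * b"] by simp
qed

lemma SS_uminus: "x \<in> SS m n \<Longrightarrow> - x \<in> SS m n"
  using SS_smult[of x m n "-1"] by simp

lemma SS_diff: "x \<in> SS m n \<Longrightarrow> y \<in> SS m n \<Longrightarrow> x - y \<in> SS m n"
  using SS_add[of x m n "- y"] SS_uminus[of y m n] by simp

lemma SS_ideal: "b \<in> Uideal m n \<Longrightarrow> b \<in> SS m n"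
  using SSI[OF zspan_zero, of b m n] by simp

lemma SS_zero: "0 \<in> SS m n"
  using SS_ideal[of 0 m n] gen_ideal_zero unfolding Uideal_def by blast

lemma SS_X: "(I, J) \<in> Xplus m n \<Longrightarrow> RIJ m n I J \<in> SS m n"
proof -
  assume "(I, J) \<in> Xplus m n"
  hence "RIJ m n I J \<in> zspan {RIJ m n I J | I J. (I, J) \<in> Xplus m n}" by (intro zspan_gen, blast)
  moreover have "0 \<in> Uideal m n" unfolding Uideal_def by (rule gen_ideal_zero)
  ultimately show ?thesis using SSI[of "RIJ m n I J" m n 0] by simp
qed

lemma SS_smult_X: "(I, J) \<in> Xplus m n \<Longrightarrow> of_int c * RIJ m n I J \<in> SS m n"
  using SS_X SS_smult by blast

lemma SS_sum: "finite A \<Longrightarrow> (\<And>x. x \<in> A \<Longrightarrow> f x \<in> SS m n) \<Longrightarrow> sum f A \<in> SS m n"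
  by (induction A rule: finite_induct) (auto intro: SS_add SS_zero)

lemma SS_sign: "x \<in> SS m n \<Longrightarrow> (-1)^e * x \<in> SS m n"
  using SS_smult[of x m n "(-1)^e"] by simp


section \<open>Polynomial induction\<close>

lemma single_single_pow: "Poly_Mapping.single (Poly_Mapping.single a b) (1::int) = Var a ^ b"
proof (induction b)
  case 0 then show ?case by simp
next
  case (Suc b)
  have "Poly_Mapping.single (Poly_Mapping.single a (Suc b)) (1::int)
      = Poly_Mapping.single (Poly_Mapping.single a 1 + Poly_Mapping.single a b) (1 * 1)"
    by (simp add: single_add[symmetric])
  also have "\<dots> = Var a * Poly_Mapping.single (Poly_Mapping.single a b) 1"
    unfolding Var_def by (rule mult_single[symmetric])
  finally show ?case using Suc by simp
qed

lemma zpoly_induct: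
  fixes P :: "zpoly \<Rightarrow> bool"
  assumes one: "P 1" and diff: "\<And>a b. P a \<Longrightarrow> P b \<Longrightarrow> P (a - b)"
    and var: "\<And>x f. P f \<Longrightarrow> P (Var x * f)"
  shows "P q"
proof -
  have pow: "P (Var a ^ b * f)" if "P f" for a b f
    using that by (induction b) (auto simp: mult.assoc var)
  have mono: "P f \<longrightarrow> P (Poly_Mapping.single \<mu> 1 * f)" for \<mu> :: "var \<Rightarrow>\<^sub>0 nat" and f
  proof (induction \<mu> arbitrary: f rule: Poly_Mapping.update_induct)
    case const then show ?case by simp
  next
    case (update \<mu> a b)
    have "Poly_Mapping.update a b \<mu> = \<mu> + Poly_Mapping.single a b"
      using update(1) by (intro poly_mapping_eqI) (auto simp: lookup_update lookup_add lookup_single in_keys_iff)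
    hence "Poly_Mapping.single (Poly_Mapping.update a b \<mu>) (1::int) = Poly_Mapping.single \<mu> 1 * Var a ^ b"
      by (simp add: mult_single single_single_pow[symmetric])
    then show ?case using update(3) pow by (simp add: mult.assoc)
  qed
  have zero: "P 0" using diff[OF one one] by simp
  show ?thesis
  proof (rule frag_induction[where S=UNIV and c=q and P=P])
    fix x :: "var \<Rightarrow>\<^sub>0 nat"
    show "P (Poly_Mapping.single x 1)" using mono[of 1 x] one by simp
  qed (auto intro: zero diff)
qed


definition UJ :: "nat list \<Rightarrow> zpoly" where
  "UJ J = (\<Prod>k<length J. uu (int k + 1) ^ (J ! k))"

lemma RI_Mw: "RI m n I = Mw (ww m n) I"
  unfolding RI_def Mw_def ..

lemma RIJ_UJ: "RIJ m n I J = RI m n I * UJ J"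
  unfolding RIJ_def UJ_def ..

lemma uu_neg: "i < 0 \<Longrightarrow> uu i = 0" unfolding uu_def by simp
lemma uu_0: "uu 0 = 1" unfolding uu_def by simp

lemma ww_hi: "int n - int m < i \<Longrightarrow> ww m n i = uu i"
  unfolding ww_def vv_def by simp

lemma Var_U: "Var (Ugen i) = uu (int i + 1)"
  unfolding uu_def by simp

lemma Var_V: "Var (Vgen j) = uu (int n - int m - int j) - ww m n (int n - int m - int j)"
  unfolding ww_def vv_def by simp

lemma UJ_inc:
  assumes "1 \<le> l" "l \<le> int (length J)"
  shows "uu l * UJ J = UJ (J[nat l - 1 := J ! (nat l - 1) + 1])"
proof -
  let ?k0 = "nat l - 1"
  have k0: "?k0 < length J" using assms by linarith
  have l: "int ?k0 + 1 = l" using assms by linarith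
  have "UJ (J[?k0 := J ! ?k0 + 1]) = (\<Prod>k<length J. uu (int k + 1) ^ (J ! k) * (if k = ?k0 then uu (int k + 1) else 1))"
    unfolding UJ_def by (rule prod.cong, auto simp: nth_list_update)
  also have "\<dots> = UJ J * (\<Prod>k<length J. (if k = ?k0 then uu (int k + 1) else 1))"
    unfolding UJ_def prod.distrib ..
  also have "\<dots> = UJ J * uu l" using k0 l by simp
  finally show ?thesis by (simp add: mult.commute)
qed

lemma UJ_zero: "UJ (replicate q 0) = 1"
  unfolding UJ_def by simp

lemma X_in:
  assumes "length I \<le> m" "length J \<le> n" "int (length I) - int (length J) = int m - int n"
  shows "RI m n I * UJ J \<in> SS m n"
proof -
  obtain K' c where K': "sorted_wrt (>) K'" "length K' = length I" "c = 0 \<or> c = 1 \<or> c = -1"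
    "Mw (ww m n) I = of_int c * Mw (ww m n) K'"
    using Mw_sort by blast
  have "(K', J) \<in> Xplus m n" unfolding Xplus_def using K' assms by auto
  hence "of_int c * RIJ m n K' J \<in> SS m n" by (rule SS_smult_X)
  thus ?thesis unfolding RIJ_UJ RI_Mw K'(4) by (simp add: mult.assoc)
qed


lemma pad:
  assumes "int p + (int n - int m) < 0" "length I = p"
  shows "RI m n (I @ [- int p]) = RI m n I"
proof -
  let ?w = "ww m n"
  have z: "?w (- int p + int j) = 0" if "j < p" for j
  proof -
    have "?w (- int p + int j) = uu (- int p + int j)" by (rule ww_hi, use that assms(1) in linarith)
    also have "\<dots> = 0" by (rule uu_neg, use that in linarith)
    finally show ?thesis .
  qed
  have o: "?w (- int p + int p) = 1" using assms(1) by (simp add: ww_hi uu_0)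
  have "RI m n (I @ [- int p]) = (\<Sum>j<Suc p. (-1)^(p + j) * ?w (- int p + int j) * Cm ?w I j)"
    unfolding RI_Mw Mw_lap assms(2) ..
  also have "\<dots> = (-1)^(p + p) * ?w (- int p + int p) * Cm ?w I p"
  proof -
    have "(\<Sum>j<p. (-1)^(p + j) * ?w (- int p + int j) * Cm ?w I j) = 0"
      by (rule sum.neutral, use z in auto)
    thus ?thesis by (simp only: sum.lessThan_Suc, simp)
  qed
  also have "\<dots> = RI m n I" using o Cm_top[of ?w I] assms(2) by (simp add: RI_Mw)
  finally show ?thesis .
qed

lemma WU:
  assumes Gf: "\<forall>I J. length I = p \<longrightarrow> length J = q \<longrightarrow> RI m n I * UJ J * f \<in> SS m n"
    and I: "length I = p" and J: "length J = q" and l: "l \<le> int q"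
  shows "RI m n I * UJ J * (uu l * f) \<in> SS m n"
proof (cases "l < 0")
  case True then show ?thesis by (simp add: uu_neg SS_zero)
next
  case False
  show ?thesis
  proof (cases "l = 0")
    case True then show ?thesis using Gf I J by (simp add: uu_0)
  next
    case False
    with \<open>\<not> l < 0\<close> have l1: "1 \<le> l" by simp
    have "RI m n I * UJ J * (uu l * f) = RI m n I * (uu l * UJ J) * f"
      by (simp add: ac_simps)
    also have "\<dots> = RI m n I * UJ (J[nat l - 1 := J ! (nat l - 1) + 1]) * f"
      using UJ_inc[OF l1, of J] l J by simp
    finally have "RI m n I * UJ J * (uu l * f) = RI m n I * UJ (J[nat l - 1 := J ! (nat l - 1) + 1]) * f" .
    then show ?thesis using Gf I J by simp
  qed
qed


lemma Cm_SS:
  assumes IH: "\<And>I'. length I' = p \<Longrightarrow> RI m n I' * UJ J * g \<in> SS m n"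
    and I: "length I = p" and j: "j \<le> p"
  shows "Cm (ww m n) I j * UJ J * g \<in> SS m n"
proof -
  have "Cm (ww m n) I j * UJ J * g
      = (\<Sum>S\<in>{S. S \<subseteq> {..<length I} \<and> card S = length I - j}. RI m n (Ksh I S) * UJ J * g)"
    unfolding Cm_e[of j I, OF j[folded I]] sum_distrib_right RI_Mw ..
  also have "\<dots> \<in> SS m n"
  proof (rule SS_sum)
    show "finite {S. S \<subseteq> {..<length I} \<and> card S = length I - j}"
      by (rule finite_subset[of _ "Pow {..<length I}"], auto)
  next
    fix S show "RI m n (Ksh I S) * UJ J * g \<in> SS m n" using IH I by simp
  qed
  finally show ?thesis .
qed

lemma core:
  assumes Pn: "\<forall>I f. length I = Suc p \<longrightarrow> RI m n I * f \<in> SS m n"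
    and q: "int q = int p + (int n - int m)"
    and Gf: "\<forall>I J. length I = p \<longrightarrow> length J = q \<longrightarrow> RI m n I * UJ J * f \<in> SS m n"
  shows "length I = p \<Longrightarrow> length J = q \<Longrightarrow> RI m n I * UJ J * (ww m n c * f) \<in> SS m n"
proof -
  define k where "k = int n - int m"
  let ?w = "ww m n"
  define d where "d c = (if c \<le> k then nat (k + 1 - c) else if c > k + int p then nat (c - k - int p) else 0)" for c
  have main: "\<forall>c I J. d c = N \<longrightarrow> length I = p \<longrightarrow> length J = q \<longrightarrow> RI m n I * UJ J * (?w c * f) \<in> SS m n" for N
  proof (induction N rule: less_induct)
    case (less N)
    show ?case
    proof (intro allI impI)
      fix c :: int and I :: "int list" and J :: "nat list" assume dN: "d c = N" and I: "length I = p" and J: "length J = q"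
      have IH: "RI m n I' * UJ J' * (?w c' * f) \<in> SS m n"
        if "d c' < d c" "length I' = p" "length J' = q" for c' I' J'
        using less.IH[of "d c'"] that dN by blast
      consider (win) "k < c" "c \<le> k + int p" | (hi) "c > k + int p" | (lo) "c \<le> k" by linarith
      then show "RI m n I * UJ J * (?w c * f) \<in> SS m n"
      proof cases
        case win
        have "?w c = uu c" by (rule ww_hi, use win k_def in simp)
        moreover have "RI m n I * UJ J * (uu c * f) \<in> SS m n"
          by (rule WU[OF Gf I J], use win q k_def in linarith)
        ultimately show ?thesis by simp
      next
        case hi
        define y where "y = c - int p"
        have lap: "Mw ?w (I @ [y]) = (\<Sum>j<p. (-1)^(p + j) * ?w (y + int j) * Cm ?w I j) + Mw ?w I * ?w c"
          unfolding Mw_lap I using Cm_top[of ?w I] I by (simp add: y_def power_add[symmetric] mult_ac)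
        have eq: "RI m n I * UJ J * (?w c * f)
            = RI m n (I @ [y]) * (UJ J * f) - (\<Sum>j<p. (-1)^(p + j) * (Cm ?w I j * UJ J * (?w (y + int j) * f)))"
        proof -
          have "RI m n I * UJ J * (?w c * f) = (Mw ?w I * ?w c) * (UJ J * f)" by (simp add: RI_Mw mult_ac)
          also have "\<dots> = (Mw ?w (I @ [y]) - (\<Sum>j<p. (-1)^(p + j) * ?w (y + int j) * Cm ?w I j)) * (UJ J * f)"
            using lap by (simp add: algebra_simps)
          also have "\<dots> = RI m n (I @ [y]) * (UJ J * f) - (\<Sum>j<p. (-1)^(p + j) * (Cm ?w I j * UJ J * (?w (y + int j) * f)))"
            by (simp add: RI_Mw left_diff_distrib right_diff_distrib sum_distrib_left sum_distrib_right mult_ac)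
          finally show ?thesis .
        qed
        have A: "RI m n (I @ [y]) * (UJ J * f) \<in> SS m n" using Pn I by simp
        have B: "(\<Sum>j<p. (-1)^(p + j) * (Cm ?w I j * UJ J * (?w (y + int j) * f))) \<in> SS m n"
        proof (rule SS_sum, simp)
          fix j assume "j \<in> {..<p}"
          hence j: "j < p" by simp
          have "d (y + int j) < d c" unfolding d_def y_def using hi j by auto
          hence "\<And>I'. length I' = p \<Longrightarrow> RI m n I' * UJ J * (?w (y + int j) * f) \<in> SS m n"
            using IH J by blast
          hence "Cm ?w I j * UJ J * (?w (y + int j) * f) \<in> SS m n"
            by (rule Cm_SS, use I j in auto)
          thus "(-1)^(p + j) * (Cm ?w I j * UJ J * (?w (y + int j) * f)) \<in> SS m n" by (rule SS_sign)
        qed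
        show ?thesis unfolding eq by (rule SS_diff[OF A B])
      next
        case lo
        define K where "K = map (\<lambda>x. x - 1) I"
        have K: "length K = p" using I K_def by simp
        have KI: "map (\<lambda>x. x + 1) K = I" unfolding K_def by (induction I) auto
        have lap: "Mw ?w (K @ [c]) = (-1)^p * ?w c * Mw ?w I + (\<Sum>j<p. (-1)^(p + Suc j) * ?w (c + int (Suc j)) * Cm ?w K (Suc j))"
          unfolding Mw_lap K sum.lessThan_Suc_shift using Cm_0[of ?w K] KI by simp
        have sgn: "(-1)^p * (-1)^p = (1::zpoly)" by (simp add: power_add[symmetric])
        have eq: "RI m n I * UJ J * (?w c * f)
            = (-1)^p * (RI m n (K @ [c]) * (UJ J * f) - (\<Sum>j<p. (-1)^(p + Suc j) * (Cm ?w K (Suc j) * UJ J * (?w (c + int (Suc j)) * f))))"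
        proof -
          have "RI m n I * UJ J * (?w c * f) = ((-1)^p * (-1)^p) * (?w c * Mw ?w I) * (UJ J * f)" by (simp add: RI_Mw mult_ac sgn)
          also have "\<dots> = (-1)^p * ((Mw ?w (K @ [c]) - (\<Sum>j<p. (-1)^(p + Suc j) * ?w (c + int (Suc j)) * Cm ?w K (Suc j))) * (UJ J * f))"
            using lap by (simp add: algebra_simps)
          also have "\<dots> = (-1)^p * (RI m n (K @ [c]) * (UJ J * f) - (\<Sum>j<p. (-1)^(p + Suc j) * (Cm ?w K (Suc j) * UJ J * (?w (c + int (Suc j)) * f))))"
            by (simp add: RI_Mw left_diff_distrib right_diff_distrib sum_distrib_left sum_distrib_right mult_ac)
          finally show ?thesis .
        qed
        have A: "RI m n (K @ [c]) * (UJ J * f) \<in> SS m n" using Pn K by simp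
        have B: "(\<Sum>j<p. (-1)^(p + Suc j) * (Cm ?w K (Suc j) * UJ J * (?w (c + int (Suc j)) * f))) \<in> SS m n"
        proof (rule SS_sum, simp)
          fix j assume "j \<in> {..<p}"
          hence j: "j < p" by simp
          have "d (c + int (Suc j)) < d c" unfolding d_def using lo j by auto
          hence "\<And>I'. length I' = p \<Longrightarrow> RI m n I' * UJ J * (?w (c + int (Suc j)) * f) \<in> SS m n"
            using IH J by blast
          hence "Cm ?w K (Suc j) * UJ J * (?w (c + int (Suc j)) * f) \<in> SS m n"
            by (rule Cm_SS, use K j in auto)
          thus "(-1)^(p + Suc j) * (Cm ?w K (Suc j) * UJ J * (?w (c + int (Suc j)) * f)) \<in> SS m n" by (rule SS_sign)
        qed
        show ?thesis unfolding eq by (rule SS_sign, rule SS_diff[OF A B])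
      qed
    qed
  qed
  assume "length I = p" "length J = q"
  thus ?thesis using main by blast
qed


lemma step:
  assumes pm: "p \<le> m" and Pn: "\<forall>I f. length I = Suc p \<longrightarrow> RI m n I * f \<in> SS m n"
  shows "\<forall>I f. length I = p \<longrightarrow> RI m n I * f \<in> SS m n"
proof (cases "int p + (int n - int m) < 0")
  case True
  show ?thesis
  proof (intro allI impI)
    fix I :: "int list" and f assume I: "length I = p"
    have "RI m n I * f = RI m n (I @ [- int p]) * f" using pad[OF True I] by simp
    also have "\<dots> \<in> SS m n" using Pn I by simp
    finally show "RI m n I * f \<in> SS m n" .
  qed
next
  case False
  define q where "q = nat (int p + (int n - int m))"
  have q: "int q = int p + (int n - int m)" using False q_def by simp
  define k where "k = int n - int m"
  have G: "\<forall>I J. length I = p \<longrightarrow> length J = q \<longrightarrow> RI m n I * UJ J * f \<in> SS m n" for f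
  proof (induction f rule: zpoly_induct)
    case 1
    show ?case
    proof (intro allI impI)
      fix I :: "int list" and J :: "nat list" assume I: "length I = p" and J: "length J = q"
      have "RI m n I * UJ J \<in> SS m n" by (rule X_in) (use I J q pm in linarith)+
      thus "RI m n I * UJ J * 1 \<in> SS m n" by simp
    qed
  next
    case (2 a b)
    show ?case
    proof (intro allI impI)
      fix I :: "int list" and J :: "nat list" assume I: "length I = p" and J: "length J = q"
      have "RI m n I * UJ J * (a - b) = RI m n I * UJ J * a - RI m n I * UJ J * b" by (simp add: algebra_simps)
      thus "RI m n I * UJ J * (a - b) \<in> SS m n" using 2 I J SS_diff by metis
    qed
  next
    case (3 x f)
    show ?case
    proof (intro allI impI)
      fix I :: "int list" and J :: "nat list" assume I: "length I = p" and J: "length J = q"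
      have WU': "RI m n I * UJ J * (uu l * f) \<in> SS m n" if "l \<le> k" for l
        by (rule WU[OF 3 I J], use that q k_def in linarith)
      have CO: "RI m n I * UJ J * (ww m n c * f) \<in> SS m n" for c
        by (rule core[OF Pn q 3 I J])
      show "RI m n I * UJ J * (Var x * f) \<in> SS m n"
      proof (cases x)
        case (Ugen i)
        show ?thesis
        proof (cases "int i + 1 \<le> k")
          case True thus ?thesis using WU' Ugen Var_U by simp
        next
          case False
          hence "Var x = ww m n (int i + 1)" using Ugen Var_U ww_hi k_def by simp
          thus ?thesis using CO by simp
        qed
      next
        case (Vgen j)
        have "RI m n I * UJ J * (Var x * f)
            = RI m n I * UJ J * (uu (k - int j) * f) - RI m n I * UJ J * (ww m n (k - int j) * f)"
        proof -
          have vx: "Var x = uu (k - int j) - ww m n (k - int j)" using Vgen Var_V[of j n m] k_def by simp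
          show ?thesis unfolding vx by (simp add: algebra_simps)
        qed
        moreover have "RI m n I * UJ J * (uu (k - int j) * f) \<in> SS m n" by (rule WU', simp)
        ultimately show ?thesis using CO SS_diff by metis
      qed
    qed
  qed
  show ?thesis
  proof (intro allI impI)
    fix I :: "int list" and f assume I: "length I = p"
    have "RI m n I * UJ (replicate q 0) * f \<in> SS m n" using G I by simp
    thus "RI m n I * f \<in> SS m n" by (simp add: UJ_zero)
  qed
qed

lemma all_SS: "f \<in> SS m n"
proof -
  have top: "\<forall>I f. length I = Suc m \<longrightarrow> RI m n I * f \<in> SS m n"
  proof (intro allI impI)
    fix I :: "int list" and f assume "length I = Suc m"
    hence "RI m n I \<in> {RI m n I | I. length I = m + 1}" by auto
    hence "f * RI m n I \<in> Uideal m n" unfolding Uideal_def by (intro gen_ideal_mult gen_ideal_gen)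
    thus "RI m n I * f \<in> SS m n" by (simp add: mult.commute SS_ideal)
  qed
  have down: "\<forall>I f. length I = Suc m - d \<longrightarrow> RI m n I * f \<in> SS m n" if "d \<le> Suc m" for d
    using that
  proof (induction d)
    case 0 then show ?case using top by simp
  next
    case (Suc d)
    have "Suc m - Suc d \<le> m" "Suc (Suc m - Suc d) = Suc m - d" using Suc.prems by auto
    thus ?case using step[of "Suc m - Suc d" m n] Suc by simp
  qed
  have "RI m n [] * f \<in> SS m n" using down[of "Suc m"] by simp
  moreover have "RI m n [] = 1" unfolding RI_def by simp
  ultimately show ?thesis by simp
qed

theorem mainTheorem9:
  fixes m n :: nat
  shows "\<forall>p :: zpoly. \<exists>a b. a \<in> zspan {RIJ m n I J | I J. (I, J) \<in> Xplus m n}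
            \<and> b \<in> Uideal m n \<and> p = a + b"
proof
  fix p :: zpoly
  show "\<exists>a b. a \<in> zspan {RIJ m n I J | I J. (I, J) \<in> Xplus m n} \<and> b \<in> Uideal m n \<and> p = a + b"
    using all_SS[of p m n] by (elim SSE) blast
qed

end
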